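(* Let $\Delta$ be a finite $4$-valent graph, let $\mathcal{C}$ be a partition of $E\Delta$ into cycles, and let $G\le\mathrm{Aut}(\Delta)$ be arc-transitive and $\mathcal{C}$-invariant, so that $G\le\mathrm{Aut}(\mathrm{s}(\Delta,\mathcal{C}))$ via $(\alpha,C)^g=(\alpha^g,C^g)$. Suppose that $G\le A\le\mathrm{Aut}(\mathrm{s}(\Delta,\mathcal{C}))$, that $A$ is vertex-transitive on $\mathrm{s}(\Delta,\mathcal{C})$, and that for every vertex $v$ of $\mathrm{s}(\Delta,\mathcal{C})$ the group induced by $A_v$ on the neighbourhood of $v$ is cyclic of order $2$. Then $A\le\mathrm{Aut}(\Delta)$; that is, $A$ preserves the set of pairs $\{(\alpha,C),(\alpha,D)\}$ ($\alpha\in V\Delta$, $C\neq D$ the two cycles of $\mathcal{C}$ through $\alpha$), and under the identification of such a pair with $\alpha$, $A$ acts faithfully on $V\Delta$ as a group of automorphisms of $\Delta$.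
   Context: Splitting: for a $4$-valent graph $\Delta$ and a partition $\mathcal{C}$ of $E\Delta$ into cycles (each vertex lies on exactly two cycles of $\mathcal{C}$), $\mathrm{s}(\Delta,\mathcal{C})$ is the cubic graph with vertex set $\{(\alpha,C)\in V\Delta\times\mathcal{C} : \alpha\in VC\}$, where $(\alpha,C)$ and $(\beta,D)$ are adjacent iff either $C\ne D$ and $\alpha=\beta$, or $C=D$ and $\alpha,\beta$ are adjacent in $\Delta$. $G$ is $\mathcal{C}$-invariant if it permutes the cycles of $\mathcal{C}$. $A_v$ denotes the stabilizer of $v$ in $A$. *)

theory Defs
  imports "HOL-Combinatorics.Permutations"
begin

definition simple_graph :: "'a set \<Rightarrow> 'a set set \<Rightarrow> bool" where
  "simple_graph V Ed \<longleftrightarrow> finite V \<and> (\<forall>e\<in>Ed. e \<subseteq> V \<and> card e = 2)"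

definition nbhd :: "'a set \<Rightarrow> 'a set set \<Rightarrow> 'a \<Rightarrow> 'a set" where
  "nbhd V Ed x = {y\<in>V. {x, y} \<in> Ed}"

definition four_valent :: "'a set \<Rightarrow> 'a set set \<Rightarrow> bool" where
  "four_valent V Ed \<longleftrightarrow> (\<forall>x\<in>V. card (nbhd V Ed x) = 4)"

text \<open>A cycle, viewed as a set of edges: a nonempty finite connected 2-regular
  edge set (in a simple graph it automatically has length at least 3).\<close>

definition is_cycle :: "'a set set \<Rightarrow> bool" where
  "is_cycle C \<longleftrightarrow> C \<noteq> {} \<and> finite C \<and> (\<forall>e\<in>C. card e = 2) \<and>
     (\<forall>x\<in>\<Union>C. card {e\<in>C. x \<in> e} = 2) \<and>
     (\<forall>x\<in>\<Union>C. \<forall>y\<in>\<Union>C. (x, y) \<in> {(u, v). {u, v} \<in> C}\<^sup>*)"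

definition cycle_partition :: "'a set \<Rightarrow> 'a set set \<Rightarrow> 'a set set set \<Rightarrow> bool" where
  "cycle_partition V Ed \<C> \<longleftrightarrow> (\<forall>C\<in>\<C>. is_cycle C \<and> C \<subseteq> Ed) \<and> \<Union>\<C> = Ed \<and>
     (\<forall>C\<in>\<C>. \<forall>D\<in>\<C>. C \<noteq> D \<longrightarrow> C \<inter> D = {}) \<and>
     (\<forall>\<alpha>\<in>V. card {C\<in>\<C>. \<alpha> \<in> \<Union>C} = 2)"

definition graph_aut :: "'a set \<Rightarrow> 'a set set \<Rightarrow> ('a \<Rightarrow> 'a) set" where
  "graph_aut V Ed = {f. f permutes V \<and> (\<forall>x\<in>V. \<forall>y\<in>V. {x, y} \<in> Ed \<longleftrightarrow> {f x, f y} \<in> Ed)}"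

definition perm_group :: "'a set \<Rightarrow> ('a \<Rightarrow> 'a) set \<Rightarrow> bool" where
  "perm_group S A \<longleftrightarrow> (\<forall>f\<in>A. f permutes S) \<and> id \<in> A \<and>
     (\<forall>f\<in>A. \<forall>g\<in>A. f \<circ> g \<in> A) \<and> (\<forall>f\<in>A. inv f \<in> A)"

definition arc_transitive :: "'a set \<Rightarrow> 'a set set \<Rightarrow> ('a \<Rightarrow> 'a) set \<Rightarrow> bool" where
  "arc_transitive V Ed G \<longleftrightarrow> (\<forall>x\<in>V. \<forall>y\<in>V. \<forall>u\<in>V. \<forall>v\<in>V.
     {x, y} \<in> Ed \<longrightarrow> {u, v} \<in> Ed \<longrightarrow> (\<exists>g\<in>G. g x = u \<and> g y = v))"

definition cycle_invariant :: "'a set set set \<Rightarrow> ('a \<Rightarrow> 'a) set \<Rightarrow> bool" where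
  "cycle_invariant \<C> G \<longleftrightarrow> (\<forall>g\<in>G. \<forall>C\<in>\<C>. (\<lambda>e. g ` e) ` C \<in> \<C>)"

definition split_verts :: "'a set set set \<Rightarrow> ('a \<times> 'a set set) set" where
  "split_verts \<C> = {(\<alpha>, C). C \<in> \<C> \<and> \<alpha> \<in> \<Union>C}"

definition split_adj :: "('a \<times> 'a set set) \<Rightarrow> ('a \<times> 'a set set) \<Rightarrow> bool" where
  "split_adj v w \<longleftrightarrow> (snd v \<noteq> snd w \<and> fst v = fst w) \<or>
                     (snd v = snd w \<and> {fst v, fst w} \<in> snd v)"

definition split_nbhd :: "'a set set set \<Rightarrow> ('a \<times> 'a set set) \<Rightarrow> ('a \<times> 'a set set) set" where
  "split_nbhd \<C> v = {w\<in>split_verts \<C>. split_adj v w}"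

definition split_aut :: "'a set set set \<Rightarrow> (('a \<times> 'a set set) \<Rightarrow> ('a \<times> 'a set set)) set" where
  "split_aut \<C> = {f. f permutes split_verts \<C> \<and>
     (\<forall>v\<in>split_verts \<C>. \<forall>w\<in>split_verts \<C>. split_adj v w \<longleftrightarrow> split_adj (f v) (f w))}"

definition split_lift :: "'a set set set \<Rightarrow> ('a \<Rightarrow> 'a) \<Rightarrow> ('a \<times> 'a set set) \<Rightarrow> ('a \<times> 'a set set)" where
  "split_lift \<C> g x = (if x \<in> split_verts \<C> then (g (fst x), (\<lambda>e. g ` e) ` snd x) else x)"

definition local_group :: "'a set set set \<Rightarrow> (('a \<times> 'a set set) \<Rightarrow> ('a \<times> 'a set set)) set
     \<Rightarrow> ('a \<times> 'a set set) \<Rightarrow> (('a \<times> 'a set set) \<Rightarrow> ('a \<times> 'a set set)) set" where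
  "local_group \<C> A v = (\<lambda>a. restrict a (split_nbhd \<C> v)) ` {a\<in>A. a v = v}"

end

theory Submission
  imports Defs
begin

locale spl =
  fixes V :: "'a set" and Ed :: "'a set set" and CC :: "'a set set set"
    and G :: "('a \<Rightarrow> 'a) set" and A :: "(('a \<times> 'a set set) \<Rightarrow> ('a \<times> 'a set set)) set"
  assumes sg: "simple_graph V Ed"
    and cp: "cycle_partition V Ed CC"
    and Gaut: "G \<subseteq> graph_aut V Ed"
    and at: "arc_transitive V Ed G" and ci: "cycle_invariant CC G"
    and pg: "perm_group (split_verts CC) A" and As: "A \<subseteq> split_aut CC"
    and lift: "\<forall>g\<in>G. split_lift CC g \<in> A"
    and lg: "\<forall>v\<in>split_verts CC. card (local_group CC A v) = 2"
begin

lemma A_perm: "a \<in> A \<Longrightarrow> a permutes split_verts CC"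
  using pg unfolding perm_group_def by blast

lemma A_inv: "a \<in> A \<Longrightarrow> inv a \<in> A"
  using pg unfolding perm_group_def by blast

lemma A_comp: "a \<in> A \<Longrightarrow> b \<in> A \<Longrightarrow> a \<circ> b \<in> A"
  using pg unfolding perm_group_def by blast

lemma A_id: "id \<in> A"
  using pg unfolding perm_group_def by blast

lemma A_adj: assumes aA: "a \<in> A" and v: "v \<in> split_verts CC" and w: "w \<in> split_verts CC"
    and adj: "split_adj v w" shows "split_adj (a v) (a w)"
proof -
  have "a \<in> split_aut CC" using As aA by (rule subsetD)
  then have "a permutes split_verts CC \<and> (\<forall>v\<in>split_verts CC. \<forall>w\<in>split_verts CC. split_adj v w \<longleftrightarrow> split_adj (a v) (a w))"
    unfolding split_aut_def by (rule CollectD)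
  then have "\<forall>v\<in>split_verts CC. \<forall>w\<in>split_verts CC. split_adj v w \<longleftrightarrow> split_adj (a v) (a w)"
    by (rule conjunct2)
  then have "\<forall>w\<in>split_verts CC. split_adj v w \<longleftrightarrow> split_adj (a v) (a w)" using v by (rule bspec)
  then have "split_adj v w \<longleftrightarrow> split_adj (a v) (a w)" using w by (rule bspec)
  then show ?thesis using adj by (rule iffD1)
qed

lemma A_in: assumes "a \<in> A" "v \<in> split_verts CC" shows "a v \<in> split_verts CC"
  using permutes_in_image[OF A_perm[OF assms(1)]] assms(2) by simp

lemma cpd: "(\<forall>C\<in>CC. is_cycle C \<and> C \<subseteq> Ed) \<and> \<Union>CC = Ed \<and>
     (\<forall>C\<in>CC. \<forall>D\<in>CC. C \<noteq> D \<longrightarrow> C \<inter> D = {}) \<and>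
     (\<forall>\<alpha>\<in>V. card {C\<in>CC. \<alpha> \<in> \<Union>C} = 2)"
  using cp unfolding cycle_partition_def .

lemma CC_sub: "C \<in> CC \<Longrightarrow> C \<subseteq> Ed"
  using cpd[THEN conjunct1] by simp

lemma CC_cyc: "C \<in> CC \<Longrightarrow> is_cycle C"
  using cpd[THEN conjunct1] by simp

lemma Ed_union: "Ed = \<Union>CC"
  using cpd by simp

lemma CC_disj: assumes "C \<in> CC" "D \<in> CC" "e \<in> C" "e \<in> D" shows "C = D"
proof (rule ccontr)
  assume "C \<noteq> D"
  have h: "\<forall>C\<in>CC. \<forall>D\<in>CC. C \<noteq> D \<longrightarrow> C \<inter> D = {}"
    using cpd[THEN conjunct2, THEN conjunct2, THEN conjunct1] .
  have "C \<noteq> D \<longrightarrow> C \<inter> D = {}" using bspec[OF bspec[OF h assms(1)] assms(2)] .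
  then have "C \<inter> D = {}" using \<open>C \<noteq> D\<close> by (rule mp)
  moreover have "e \<in> C \<inter> D" using assms(3,4) by (rule IntI)
  ultimately show False by simp
qed

lemma V_two: "\<alpha> \<in> V \<Longrightarrow> card {C\<in>CC. \<alpha> \<in> \<Union>C} = 2"
  using cpd by simp

lemma sgd: "finite V \<and> (\<forall>e\<in>Ed. e \<subseteq> V \<and> card e = 2)"
  using sg unfolding simple_graph_def .

lemma Ed_card: "e \<in> Ed \<Longrightarrow> card e = 2"
  using sgd by simp

lemma Ed_sub: "e \<in> Ed \<Longrightarrow> e \<subseteq> V"
  using sgd by simp

lemma sv_iff: "(x, C) \<in> split_verts CC \<longleftrightarrow> C \<in> CC \<and> x \<in> \<Union>C"
  unfolding split_verts_def by simp

lemma sv_V: assumes "(x, C) \<in> split_verts CC" shows "x \<in> V"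
proof -
  obtain e where "e \<in> C" "x \<in> e" "C \<in> CC" using assms by (auto simp: sv_iff)
  then have "e \<in> Ed" using CC_sub by blast
  then have "e \<subseteq> V" by (rule Ed_sub)
  then show ?thesis using \<open>x \<in> e\<close> by blast
qed

lemma two_ne: "{x, y} \<in> Ed \<Longrightarrow> x \<noteq> y"
  using Ed_card[of "{x, y}"] by (cases "x = y") auto

lemma edge_in: "C \<in> CC \<Longrightarrow> {x, y} \<in> C \<Longrightarrow> (x, C) \<in> split_verts CC \<and> (y, C) \<in> split_verts CC"
  by (auto simp: sv_iff)

lemma exists_nbr: assumes "C \<in> CC" "x \<in> \<Union>C" shows "\<exists>y. {x, y} \<in> C"
proof -
  obtain e where e: "e \<in> C" "x \<in> e" using assms by blast
  have "card e = 2" using e CC_sub assms Ed_card by blast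
  then obtain p q where pq: "e = {p, q}" "p \<noteq> q" by (auto simp: card_2_iff)
  from e(2) pq have "x = p \<or> x = q" by simp
  then show ?thesis
  proof
    assume "x = p" then show ?thesis using e pq by blast
  next
    assume "x = q" then have "e = {x, p}" using pq by auto
    then show ?thesis using e by blast
  qed
qed

lemma other_nbr: assumes "C \<in> CC" "{x, y} \<in> C" shows "\<exists>z. z \<noteq> y \<and> {x, z} \<in> C"
proof -
  have xin: "x \<in> \<Union>C" using assms by blast
  have "\<forall>x\<in>\<Union>C. card {e\<in>C. x \<in> e} = 2" using CC_cyc[OF assms(1)] unfolding is_cycle_def
    by (elim conjE) assumption
  then have "card {e\<in>C. x \<in> e} = 2" using xin by (rule bspec)
  then obtain e1 e2 where E: "{e\<in>C. x \<in> e} = {e1, e2}" "e1 \<noteq> e2" by (auto simp: card_2_iff)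
  have "e1 \<in> {e\<in>C. x \<in> e}" "e2 \<in> {e\<in>C. x \<in> e}" using E(1) by auto
  then have E2: "e1 \<in> C" "x \<in> e1" "e2 \<in> C" "x \<in> e2" by auto
  obtain e where e: "e \<in> C" "x \<in> e" "e \<noteq> {x, y}"
  proof (cases "e1 = {x, y}")
    case True then show ?thesis using that[of e2] E2 E(2) by simp
  next
    case False then show ?thesis using that[of e1] E2 by simp
  qed
  have "card e = 2" using e CC_sub assms Ed_card by blast
  then obtain p q where pq: "e = {p, q}" "p \<noteq> q" by (auto simp: card_2_iff)
  from e(2) pq have "x = p \<or> x = q" by simp
  then obtain z where z: "e = {x, z}"
  proof
    assume "x = p" then show ?thesis using that pq by blast
  next
    assume "x = q" then have "e = {x, p}" using pq by auto
    then show ?thesis using that by blast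
  qed
  have "z \<noteq> y" using z e(3) by blast
  then show ?thesis using z e(1) by blast
qed

lemma lift_fix:
  assumes v: "C \<in> CC" and xe: "{\<alpha>, x} \<in> C" and ye: "{\<alpha>, y} \<in> C"
  shows "\<exists>b\<in>A. b (\<alpha>, C) = (\<alpha>, C) \<and> b (x, C) = (y, C) \<and>
     (\<forall>D. D \<in> CC \<and> \<alpha> \<in> \<Union>D \<and> D \<noteq> C \<longrightarrow> b (\<alpha>, D) = (\<alpha>, D))"
proof -
  have E: "{\<alpha>, x} \<in> Ed" "{\<alpha>, y} \<in> Ed" using xe ye CC_sub v by blast+
  then have V: "\<alpha> \<in> V" "x \<in> V" "y \<in> V" using Ed_sub by blast+
  have AT: "\<forall>x\<in>V. \<forall>y\<in>V. \<forall>u\<in>V. \<forall>v\<in>V.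
     {x, y} \<in> Ed \<longrightarrow> {u, v} \<in> Ed \<longrightarrow> (\<exists>g\<in>G. g x = u \<and> g y = v)"
    using at unfolding arc_transitive_def .
  have "{\<alpha>, x} \<in> Ed \<longrightarrow> {\<alpha>, y} \<in> Ed \<longrightarrow> (\<exists>g\<in>G. g \<alpha> = \<alpha> \<and> g x = y)"
    using bspec[OF bspec[OF bspec[OF bspec[OF AT V(1)] V(2)] V(1)] V(3)] .
  then have "\<exists>g\<in>G. g \<alpha> = \<alpha> \<and> g x = y" using E by simp
  then obtain g where g: "g \<in> G" "g \<alpha> = \<alpha>" "g x = y" by blast
  have gp: "g permutes V" using g Gaut unfolding graph_aut_def by blast
  have injg: "inj g" using permutes_inj[OF gp] .
  define im where "im = (\<lambda>D. (\<lambda>e. g ` e) ` D)"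
  have imCC: "D \<in> CC \<Longrightarrow> im D \<in> CC" for D using ci g unfolding cycle_invariant_def im_def by blast
  have inj_im: "inj im"
  proof -
    have h1: "inj (\<lambda>e. g ` e)" by (rule inj_onI) (simp add: inj_image_eq_iff[OF injg])
    show ?thesis unfolding im_def by (rule inj_onI) (simp add: inj_image_eq_iff[OF h1])
  qed
  have gxy: "g ` {\<alpha>, x} = {\<alpha>, y}" using g by simp
  have "g ` {\<alpha>, x} \<in> (\<lambda>e. g ` e) ` C" using xe by (rule imageI)
  then have "{\<alpha>, y} \<in> im C" unfolding im_def gxy .
  then have imC: "im C = C" by (rule CC_disj[OF imCC[OF v] v _ ye])
  define b where "b = split_lift CC g"
  have bA: "b \<in> A" using lift g b_def by blast
  have bv: "\<And>z D. (z, D) \<in> split_verts CC \<Longrightarrow> b (z, D) = (g z, im D)"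
    unfolding b_def split_lift_def im_def by simp
  have "b (\<alpha>, C) = (\<alpha>, C)" using bv[of \<alpha> C] edge_in[OF v xe] g imC by simp
  moreover have "b (x, C) = (y, C)" using bv[of x C] edge_in[OF v xe] g imC by simp
  moreover have "b (\<alpha>, D) = (\<alpha>, D)" if D: "D \<in> CC" "\<alpha> \<in> \<Union>D" "D \<noteq> C" for D
  proof -
    have sD: "(\<alpha>, D) \<in> split_verts CC" using D by (auto simp: sv_iff)
    have "card {C\<in>CC. \<alpha> \<in> \<Union>C} = 2" using V_two V by blast
    moreover have "{C, D} \<subseteq> {C\<in>CC. \<alpha> \<in> \<Union>C}" using D v xe by blast
    moreover have "card {C, D} = 2" using D by simp
    ultimately have eq: "{C\<in>CC. \<alpha> \<in> \<Union>C} = {C, D}"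
      using card_subset_eq[of "{C\<in>CC. \<alpha> \<in> \<Union>C}" "{C, D}"] card_ge_0_finite[of "{C\<in>CC. \<alpha> \<in> \<Union>C}"]
      by simp
    obtain e where e: "e \<in> D" "\<alpha> \<in> e" using D by blast
    have ge: "g ` e \<in> im D" using e(1) unfolding im_def by (rule imageI)
    have "g \<alpha> \<in> g ` e" using e(2) by (rule imageI)
    then have "\<alpha> \<in> g ` e" using g(2) by simp
    note ge this
    then have "im D \<in> {C\<in>CC. \<alpha> \<in> \<Union>C}" using imCC[OF D(1)] by blast
    moreover have "im D \<noteq> C"
    proof
      assume "im D = C"
      then have "im D = im C" using imC by simp
      then have "D = C" by (rule injD[OF inj_im])
      then show False using D(3) by simp
    qed
    ultimately have "im D = D" using eq by blast
    then show ?thesis using bv[OF sD] g by simp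
  qed
  ultimately show ?thesis using bA by blast
qed

lemma stab_fix:
  assumes bA: "b \<in> A" and C: "C \<in> CC" "\<alpha> \<in> \<Union>C" and bv: "b (\<alpha>, C) = (\<alpha>, C)"
    and D: "D \<in> CC" "\<alpha> \<in> \<Union>D" "D \<noteq> C"
  shows "b (\<alpha>, D) = (\<alpha>, D)"
proof -
  obtain x where xe: "{\<alpha>, x} \<in> C" using exists_nbr C by blast
  obtain y where ye: "y \<noteq> x" "{\<alpha>, y} \<in> C" using other_nbr[OF C(1) xe] by blast
  obtain b1 where b1: "b1 \<in> A" "b1 (\<alpha>, C) = (\<alpha>, C)" "b1 (x, C) = (y, C)"
     "b1 (\<alpha>, D) = (\<alpha>, D)"
    using lift_fix[OF C(1) xe ye(2)] D by blast
  define v where "v = (\<alpha>, C)"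
  define N where "N = split_nbhd CC v"
  have vs: "v \<in> split_verts CC" using C v_def by (simp add: sv_iff)
  have xN: "(x, C) \<in> N" unfolding N_def split_nbhd_def split_adj_def v_def
    using edge_in[OF C(1) xe] xe by auto
  have sN: "(\<alpha>, D) \<in> N" unfolding N_def split_nbhd_def split_adj_def v_def
    using D by (auto simp: sv_iff)
  have LG: "local_group CC A v = (\<lambda>a. restrict a N) ` {a\<in>A. a v = v}"
    unfolding local_group_def N_def by simp
  have r0: "restrict id N \<in> local_group CC A v" using LG A_id by auto
  have r1: "restrict b1 N \<in> local_group CC A v" using LG b1 v_def by auto
  have rb: "restrict b N \<in> local_group CC A v" using LG bA bv v_def by auto
  have ne: "restrict id N \<noteq> restrict b1 N"
  proof
    assume "restrict id N = restrict b1 N"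
    then have "restrict id N (x, C) = restrict b1 N (x, C)" by simp
    then show False using xN b1 ye by simp
  qed
  have c2: "card (local_group CC A v) = 2" using lg vs by blast
  have sub: "{restrict id N, restrict b1 N} \<subseteq> local_group CC A v" using r0 r1 by simp
  have c2': "card {restrict id N, restrict b1 N} = 2" using ne by simp
  have fin: "finite (local_group CC A v)" using c2 card_ge_0_finite[of "local_group CC A v"] by simp
  have "local_group CC A v = {restrict id N, restrict b1 N}"
    using card_subset_eq[OF fin sub] c2 c2' by simp
  then have "restrict b N = restrict id N \<or> restrict b N = restrict b1 N" using rb by blast
  then have "restrict b N (\<alpha>, D) = restrict id N (\<alpha>, D) \<or> restrict b N (\<alpha>, D) = restrict b1 N (\<alpha>, D)"
    by metis
  then show ?thesis using sN b1 by auto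
qed

lemma spoke:
  assumes aA: "a \<in> A" and s1: "(\<alpha>, C) \<in> split_verts CC" and s2: "(\<alpha>, D) \<in> split_verts CC"
  shows "fst (a (\<alpha>, C)) = fst (a (\<alpha>, D))"
proof (cases "C = D")
  case True then show ?thesis by simp
next
  case False
  define v where "v = (\<alpha>, C)"
  define s where "s = (\<alpha>, D)"
  have adj: "split_adj v s" unfolding split_adj_def v_def s_def using False by simp
  have ws: "a v \<in> split_verts CC" "a s \<in> split_verts CC" using A_in aA s1 s2 v_def s_def by auto
  obtain \<beta> C' where w: "a v = (\<beta>, C')" by fastforce
  obtain x Y where as: "a s = (x, Y)" by fastforce
  have adj2: "split_adj (\<beta>, C') (x, Y)" using A_adj[OF aA _ _ adj] s1 s2 v_def s_def w as by simp
  show ?thesis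
  proof (rule ccontr)
    assume neq: "fst (a (\<alpha>, C)) \<noteq> fst (a (\<alpha>, D))"
    then have "\<beta> \<noteq> x" using w as v_def s_def by simp
    then have YC: "Y = C'" "{\<beta>, x} \<in> C'" using adj2 unfolding split_adj_def by auto
    have C'CC: "C' \<in> CC" using ws w sv_iff by simp
    obtain y where y: "y \<noteq> x" "{\<beta>, y} \<in> C'" using other_nbr[OF C'CC YC(2)] by blast
    obtain b where b: "b \<in> A" "b (\<beta>, C') = (\<beta>, C')" "b (x, C') = (y, C')"
      using lift_fix[OF C'CC YC(2) y(2)] by blast
    define c where "c = inv a \<circ> b \<circ> a"
    have cA: "c \<in> A" unfolding c_def using A_comp A_inv aA b by blast
    have ap: "a permutes split_verts CC" using A_perm aA .
    have "c v = v" unfolding c_def using w b(2) permutes_inverses(2)[OF ap, of v] by simp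
    moreover have "C \<in> CC" "\<alpha> \<in> \<Union>C" "D \<in> CC" "\<alpha> \<in> \<Union>D" using s1 s2 by (simp_all add: sv_iff)
    ultimately have "c s = s" unfolding v_def s_def using stab_fix[OF cA, of C \<alpha> D] False by simp
    then have "a (c s) = a s" by simp
    then have "b (a s) = a s" unfolding c_def using permutes_inverses[OF ap] by simp
    then show False using b as YC y by simp
  qed
qed

end

theorem corollary2p10:
  fixes V :: "'a set" and Ed :: "'a set set" and \<C> :: "'a set set set"
    and G :: "('a \<Rightarrow> 'a) set" and A :: "(('a \<times> 'a set set) \<Rightarrow> ('a \<times> 'a set set)) set"
  assumes "simple_graph V Ed" and "four_valent V Ed"
    and "cycle_partition V Ed \<C>"
    and "perm_group V G" and "G \<subseteq> graph_aut V Ed"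
    and "arc_transitive V Ed G" and "cycle_invariant \<C> G"
    and "perm_group (split_verts \<C>) A" and "A \<subseteq> split_aut \<C>"
    and "\<forall>g\<in>G. split_lift \<C> g \<in> A"
    and "\<forall>v\<in>split_verts \<C>. \<forall>w\<in>split_verts \<C>. \<exists>a\<in>A. a v = w"
    and "\<forall>v\<in>split_verts \<C>. card (local_group \<C> A v) = 2"
  shows "\<exists>\<phi>. (\<forall>a\<in>A. \<forall>x\<in>split_verts \<C>. fst (a x) = \<phi> a (fst x)) \<and>
             (\<forall>a\<in>A. \<phi> a \<in> graph_aut V Ed) \<and> inj_on \<phi> A"
proof -
  interpret spl V Ed \<C> G A by (unfold_locales) (fact assms)+
  define \<phi> :: "(('a \<times> 'a set set) \<Rightarrow> ('a \<times> 'a set set)) \<Rightarrow> 'a \<Rightarrow> 'a" where "\<phi> = (\<lambda>a z. if z \<in> V then fst (a (z, SOME C. C \<in> \<C> \<and> z \<in> \<Union>C)) else z)"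
  have ex: "\<exists>C. (z, C) \<in> split_verts \<C>" if "z \<in> V" for z
  proof -
    have "card {C\<in>\<C>. z \<in> \<Union>C} = 2" using that by (rule V_two)
    then have "{C\<in>\<C>. z \<in> \<Union>C} \<noteq> {}" by (metis card.empty zero_neq_numeral)
    then show ?thesis by (auto simp: sv_iff)
  qed
  have P1: "fst (a (z, C)) = \<phi> a z" if aA: "a \<in> A" and s: "(z, C) \<in> split_verts \<C>" for a z C
  proof -
    have zV: "z \<in> V" using sv_V s .
    have "\<exists>C. C \<in> \<C> \<and> z \<in> \<Union>C" using s by (auto simp: sv_iff)
    then have "(SOME C. C \<in> \<C> \<and> z \<in> \<Union>C) \<in> \<C> \<and> z \<in> \<Union>(SOME C. C \<in> \<C> \<and> z \<in> \<Union>C)"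
      by (rule someI_ex)
    then have s0: "(z, SOME C. C \<in> \<C> \<and> z \<in> \<Union>C) \<in> split_verts \<C>" by (auto simp: sv_iff)
    show ?thesis unfolding \<phi>_def using zV spoke[OF aA s s0] by simp
  qed
  have P1': "fst (a x) = \<phi> a (fst x)" if "a \<in> A" "x \<in> split_verts \<C>" for a x
    using P1[of a "fst x" "snd x"] that by simp
  have PV: "\<phi> a z \<in> V" if aA: "a \<in> A" and zV: "z \<in> V" for a z
  proof -
    obtain C where s: "(z, C) \<in> split_verts \<C>" using ex[OF zV] by blast
    have "a (z, C) \<in> split_verts \<C>" using aA s by (rule A_in)
    then have "fst (a (z, C)) \<in> V" using sv_V[of "fst (a (z, C))" "snd (a (z, C))"] by simp
    then show ?thesis using P1[OF aA s] by simp
  qed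
  have Pinv: "\<phi> (inv a) (\<phi> a z) = z" if aA: "a \<in> A" and z: "z \<in> V" for a z
  proof -
    obtain C where s: "(z, C) \<in> split_verts \<C>" using ex z by blast
    have ap: "a permutes split_verts \<C>" using A_perm aA .
    have "\<phi> (inv a) (\<phi> a z) = \<phi> (inv a) (fst (a (z, C)))" using P1[OF aA s] by simp
    also have "\<dots> = fst (inv a (a (z, C)))" using P1'[OF A_inv[OF aA] A_in[OF aA s]] by simp
    also have "\<dots> = z" using permutes_inverses[OF ap] by simp
    finally show ?thesis .
  qed
  have invinv: "inv (inv a) = a" if "a \<in> A" for a
    using A_perm[OF that] by (simp add: inv_inv_eq permutes_bij)
  have bij: "bij_betw (\<phi> a) V V" if aA: "a \<in> A" for a
    apply (rule bij_betw_byWitness[where f'="\<phi> (inv a)"])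
    using Pinv[OF aA] Pinv[OF A_inv[OF aA]] invinv[OF aA] PV[OF aA] PV[OF A_inv[OF aA]] by auto
  have injV: "\<phi> a x \<noteq> \<phi> a y" if "a \<in> A" "x \<in> V" "y \<in> V" "x \<noteq> y" for a x y
    using Pinv[OF that(1) that(2)] Pinv[OF that(1) that(3)] that(4) by metis
  have fwd: "{\<phi> a x, \<phi> a y} \<in> Ed" if aA: "a \<in> A" and xy: "x \<in> V" "y \<in> V" "{x, y} \<in> Ed" for a x y
  proof -
    obtain C where C: "C \<in> \<C>" "{x, y} \<in> C" using xy Ed_union by blast
    have s: "(x, C) \<in> split_verts \<C>" "(y, C) \<in> split_verts \<C>" using edge_in[OF C] by auto
    have "split_adj (x, C) (y, C)" unfolding split_adj_def using C by simp
    then have adj: "split_adj (a (x, C)) (a (y, C))" using A_adj aA s by blast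
    have "x \<noteq> y" using two_ne xy by blast
    then have "fst (a (x, C)) \<noteq> fst (a (y, C))" using P1[OF aA s(1)] P1[OF aA s(2)] injV[OF aA xy(1,2)] by simp
    then have "snd (a (x, C)) = snd (a (y, C)) \<and> {fst (a (x, C)), fst (a (y, C))} \<in> snd (a (x, C))"
      using adj unfolding split_adj_def by auto
    moreover have "snd (a (x, C)) \<in> \<C>"
    proof -
      have "a (x, C) \<in> split_verts \<C>" using A_in[OF aA s(1)] .
      then show ?thesis using sv_iff[of "fst (a (x, C))" "snd (a (x, C))"] by simp
    qed
    ultimately have "{fst (a (x, C)), fst (a (y, C))} \<in> Ed" using Ed_union by blast
    then show ?thesis using P1[OF aA s(1)] P1[OF aA s(2)] by simp
  qed
  have aut: "\<phi> a \<in> graph_aut V Ed" if aA: "a \<in> A" for a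
  proof -
    have "\<phi> a permutes V" by (rule bij_imp_permutes[OF bij[OF aA]]) (simp add: \<phi>_def)
    moreover have "{x, y} \<in> Ed \<longleftrightarrow> {\<phi> a x, \<phi> a y} \<in> Ed" if "x \<in> V" "y \<in> V" for x y
    proof
      assume "{x, y} \<in> Ed" then show "{\<phi> a x, \<phi> a y} \<in> Ed" using fwd aA that by blast
    next
      assume "{\<phi> a x, \<phi> a y} \<in> Ed"
      then have "{\<phi> (inv a) (\<phi> a x), \<phi> (inv a) (\<phi> a y)} \<in> Ed"
        using fwd[OF A_inv[OF aA]] PV aA that by blast
      then show "{x, y} \<in> Ed" using Pinv aA that by simp
    qed
    ultimately show ?thesis unfolding graph_aut_def by blast
  qed
  have inj: "inj_on \<phi> A"
  proof (rule inj_onI)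
    fix a b assume aA: "a \<in> A" and bA: "b \<in> A" and eq: "\<phi> a = \<phi> b"
    show "a = b"
    proof
      fix z
      show "a z = b z"
      proof (cases "z \<in> split_verts \<C>")
        case False
        then show ?thesis using permutes_not_in[OF A_perm[OF aA]] permutes_not_in[OF A_perm[OF bA]] by simp
      next
        case True
        obtain \<alpha> C where z: "z = (\<alpha>, C)" by fastforce
        have CC: "C \<in> \<C>" "\<alpha> \<in> \<Union>C" using True z by (auto simp: sv_iff)
        obtain \<beta> where e: "{\<alpha>, \<beta>} \<in> C" using exists_nbr CC by blast
        have s: "(\<alpha>, C) \<in> split_verts \<C>" "(\<beta>, C) \<in> split_verts \<C>" using edge_in[OF CC(1) e] by auto
        have ne: "\<alpha> \<noteq> \<beta>" using two_ne e CC_sub CC by blast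
        have V: "\<alpha> \<in> V" "\<beta> \<in> V" using s sv_V by auto
        have adjz: "split_adj (\<alpha>, C) (\<beta>, C)" unfolding split_adj_def using e by simp
        have key: "\<exists>X. c (\<alpha>, C) = (\<phi> c \<alpha>, X) \<and> X \<in> \<C> \<and> {\<phi> c \<alpha>, \<phi> c \<beta>} \<in> X" if cA: "c \<in> A" for c
        proof -
          have adj: "split_adj (c (\<alpha>, C)) (c (\<beta>, C))" using A_adj cA s adjz by blast
          have f1: "fst (c (\<alpha>, C)) = \<phi> c \<alpha>" "fst (c (\<beta>, C)) = \<phi> c \<beta>" using P1 cA s by auto
          have "\<phi> c \<alpha> \<noteq> \<phi> c \<beta>" using injV cA V ne by blast
          then have "snd (c (\<alpha>, C)) = snd (c (\<beta>, C)) \<and> {\<phi> c \<alpha>, \<phi> c \<beta>} \<in> snd (c (\<alpha>, C))"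
            using adj f1 unfolding split_adj_def by auto
          moreover have "snd (c (\<alpha>, C)) \<in> \<C>"
          proof -
            have "c (\<alpha>, C) \<in> split_verts \<C>" using A_in[OF cA s(1)] .
            then show ?thesis using sv_iff[of "fst (c (\<alpha>, C))" "snd (c (\<alpha>, C))"] by simp
          qed
          moreover have "c (\<alpha>, C) = (\<phi> c \<alpha>, snd (c (\<alpha>, C)))" using f1(1) by (metis prod.collapse)
          ultimately show ?thesis by blast
        qed
        obtain X where X: "a (\<alpha>, C) = (\<phi> a \<alpha>, X)" "X \<in> \<C>" "{\<phi> a \<alpha>, \<phi> a \<beta>} \<in> X" using key aA by blast
        obtain Y where Y: "b (\<alpha>, C) = (\<phi> a \<alpha>, Y)" "Y \<in> \<C>" "{\<phi> a \<alpha>, \<phi> a \<beta>} \<in> Y" using key[OF bA] by (auto simp: eq)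
        have "X = Y" using CC_disj X Y by blast
        then show ?thesis using X Y z by simp
      qed
    qed
  qed
  show ?thesis using P1' aut inj by blast
qed

end
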